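(* Let $Z_p\sim\rho_p$ and $\nu_p^2=\mathbb{E} Z_p^2$. Then for every real number $\ell \ge 2$, the function $p\mapsto\nu_p^{-\ell}\,\mathbb{E} |Z_p|^{\ell}$ is decreasing on $p>0$. In particular, for all $t\in\mathbb{R}$ and $p\ge 2$, \[ \mathbb{E} \exp(tZ_p) \le \exp(\nu_p^2t^2/2). \]
   Context: For $p>0$, $\rho_p$ is the probability density $\rho_p(x)=c_p e^{-|x|^p/p}$, $x\in\mathbb{R}$, with $c_p=\frac{p^{-1/p}}{2\Gamma(1+1/p)}$; one has $\nu_p^2=\frac{p^{2/p}\Gamma(1+3/p)}{3\Gamma(1+1/p)}$. *)

theory Defs
  imports "HOL-Analysis.Analysis"
begin

definition cp :: "real \<Rightarrow> real" where
  "cp p = p powr (-(1/p)) / (2 * Gamma (1 + 1/p))"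

definition rho :: "real \<Rightarrow> real \<Rightarrow> real" where
  "rho p x = cp p * exp (- (\<bar>x\<bar> powr p) / p)"

definition Erho :: "real \<Rightarrow> (real \<Rightarrow> real) \<Rightarrow> real" where
  "Erho p f = (\<integral>x. f x * rho p x \<partial>lborel)"

definition nu2 :: "real \<Rightarrow> real" where
  "nu2 p = Erho p (\<lambda>x. x\<^sup>2)"

definition nu :: "real \<Rightarrow> real" where
  "nu p = sqrt (nu2 p)"

end

theory Submission
  imports Defs
begin


lemma half_integral:
  fixes p l :: real
  assumes p: "p > 0" and l: "l \<ge> 0"
  shows "((\<lambda>x. x powr l * exp (- (x powr p) / p)) has_integral
           (p powr ((l+1)/p - 1) * Gamma ((l+1)/p))) {0<..}"
proof -
  define a where "a = (l+1)/p"
  have a: "a > 0" using p l by (simp add: a_def)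
  define F where "F u = p powr (a - 1) * (u powr (a - 1) / exp u)" for u :: real
  have G: "((\<lambda>t. t powr (a - 1) / exp t) has_integral Gamma a) {0<..}"
  proof -
    have "((\<lambda>t. t powr (a - 1) / exp t) has_integral Gamma a) {0..}"
      by (rule Gamma_integral_real[OF a])
    then show ?thesis
      by (subst (asm) has_integral_spike_set_eq[where T="{0<..}"])
         (auto intro!: negligible_subset[OF negligible_empty])
  qed
  have FI: "(F has_integral (p powr (a - 1) * Gamma a)) {0<..}"
    unfolding F_def by (rule has_integral_mult_right[OF G])
  have Fabs: "F absolutely_integrable_on {0<..}"
    by (rule nonnegative_absolutely_integrable_1) (use FI in \<open>auto simp: F_def\<close>)
  define g where "g x = x powr p / p" for x :: real
  have img: "g ` {0<..} = {0<..}"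
  proof
    show "g ` {0<..} \<subseteq> {0<..}" using p by (auto simp: g_def)
    show "{0<..} \<subseteq> g ` {0<..}"
    proof
      fix u :: real assume u: "u \<in> {0<..}"
      have "g ((p*u) powr (1/p)) = u" using p u by (simp add: g_def powr_powr)
      moreover have "(p*u) powr (1/p) \<in> {0<..}" using p u by simp
      ultimately show "u \<in> g ` {0<..}" by (metis image_eqI)
    qed
  qed
  have der: "(g has_field_derivative x powr (p - 1)) (at x within {0<..})" if "x \<in> {0<..}" for x
    using that p unfolding g_def
    by (auto intro!: derivative_eq_intros simp: field_simps)
  have inj: "inj_on g {0<..}"
  proof (rule inj_onI)
    fix x y :: real assume "x \<in> {0<..}" "y \<in> {0<..}" "g x = g y"
    then have xy: "x powr p = y powr p" and xy0: "x > 0" "y > 0" using p by (auto simp: g_def)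
    have "x = (x powr p) powr (1/p)" "y = (y powr p) powr (1/p)" using xy0 p by (simp_all add: powr_powr)
    then show "x = y" using xy by metis
  qed
  have "(\<lambda>x. \<bar>x powr (p - 1)\<bar> * F (g x)) absolutely_integrable_on {0<..} \<and>
        integral {0<..} (\<lambda>x. \<bar>x powr (p - 1)\<bar> * F (g x)) = p powr (a - 1) * Gamma a"
    using has_absolute_integral_change_of_variables_1'[of "{0<..}" g "\<lambda>x. x powr (p - 1)" F,
        OF _ der inj] img Fabs FI by (auto simp: integral_unique)
  then have H: "((\<lambda>x. \<bar>x powr (p - 1)\<bar> * F (g x)) has_integral (p powr (a - 1) * Gamma a)) {0<..}"
    using set_lebesgue_integral_eq_integral(1) has_integral_integral
    by (metis absolutely_integrable_on_def)
  have eq: "\<bar>x powr (p - 1)\<bar> * F (g x) = x powr l * exp (- (x powr p) / p)" if x: "x > 0" for x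
  proof -
    have "(x powr p / p) powr (a - 1) = x powr (p * (a - 1)) / p powr (a - 1)"
      using x p by (simp add: powr_divide powr_powr)
    moreover have "p * (a - 1) = l + 1 - p" using p by (simp add: a_def field_simps)
    ultimately have e1: "(x powr p / p) powr (a - 1) = x powr (l + 1 - p) / p powr (a - 1)" by simp
    have e2: "x powr (p - 1) * x powr (l + 1 - p) = x powr l"
      using x by (simp add: powr_add[symmetric])
    show ?thesis using x p e1 e2
      by (simp add: F_def g_def exp_minus field_simps)
  qed
  show ?thesis
    using H eq unfolding a_def by (subst has_integral_cong[where g = "\<lambda>x. \<bar>x powr (p - 1)\<bar> * F (g x)"]) (auto simp: a_def)
qed

definition M :: "real \<Rightarrow> real \<Rightarrow> real" where
  "M p l = p powr (l/p) * Gamma ((l+1)/p) / Gamma (1/p)"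

lemma M_simp:
  assumes p: "p > 0" and l: "l \<ge> 0"
  shows "2 * (cp p * (p powr ((l+1)/p - 1) * Gamma ((l+1)/p))) = M p l"
proof -
  have "1/p \<notin> \<int>\<^sub>\<le>\<^sub>0"
  proof
    assume "1/p \<in> \<int>\<^sub>\<le>\<^sub>0"
    then have "1/p \<le> 0" by (rule nonpos_Ints_nonpos)
    with p show False by simp
  qed
  then have g: "Gamma (1 + 1/p) = (1/p) * Gamma (1/p)"
    using Gamma_plus1[of "1/p"] by (simp add: add.commute)
  have e: "-(1/p) + ((l+1)/p - 1) = l/p - 1" using p by (simp add: field_simps)
  have "p powr (-(1/p)) * p powr ((l+1)/p - 1) = p powr (-(1/p) + ((l+1)/p - 1))"
    by (rule powr_add[symmetric])
  also have "\<dots> = p powr (l/p) / p" unfolding e using p by (simp add: powr_diff)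
  finally have "p powr (-(1/p)) * p powr ((l+1)/p - 1) = p powr (l/p) / p" .
  moreover have "2 * (cp p * (p powr ((l+1)/p - 1) * Gamma ((l+1)/p)))
      = (p powr (-(1/p)) * p powr ((l+1)/p - 1)) * Gamma ((l+1)/p) / ((1/p) * Gamma (1/p))"
    unfolding cp_def g by simp
  ultimately have "2 * (cp p * (p powr ((l+1)/p - 1) * Gamma ((l+1)/p)))
      = p powr (l/p) / p * Gamma ((l+1)/p) / ((1/p) * Gamma (1/p))" by simp
  also have "\<dots> = M p l" using p by (simp add: M_def)
  finally show ?thesis .
qed

lemma cp_pos: assumes p: "p > 0" shows "cp p > 0"
proof -
  have "Gamma (1 + 1/p) > 0" by (rule Gamma_real_pos) (use p in \<open>intro add_pos_pos, simp_all\<close>)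
  then show ?thesis using p unfolding cp_def by simp
qed

lemma rho_nonneg: "p > 0 \<Longrightarrow> rho p x \<ge> 0"
  using cp_pos[of p] by (simp add: rho_def)

lemma full_integral:
  fixes p l :: real
  assumes p: "p > 0" and l: "l \<ge> 0"
  shows "((\<lambda>x. \<bar>x\<bar> powr l * rho p x) has_integral M p l) UNIV"
proof -
  define f where "f x = \<bar>x\<bar> powr l * rho p x" for x :: real
  define I where "I = cp p * (p powr ((l+1)/p - 1) * Gamma ((l+1)/p))"
  have h: "((\<lambda>x. cp p * (x powr l * exp (- (x powr p) / p))) has_integral I) {0<..}"
    unfolding I_def by (rule has_integral_mult_right[OF half_integral[OF p l]])
  have "((\<lambda>x. cp p * (x powr l * exp (- (x powr p) / p))) has_integral I) {0<..} = (f has_integral I) {0<..}"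
    by (rule has_integral_cong) (simp add: f_def rho_def)
  with h have pos: "(f has_integral I) {0<..}" by simp
  have fabs: "f absolutely_integrable_on {0<..}"
    by (rule nonnegative_absolutely_integrable_1)
       (use pos in \<open>auto simp: f_def rho_nonneg p\<close>)
  have der: "(uminus has_field_derivative -1) (at x within {..<0})" for x :: real
    by (auto intro!: derivative_eq_intros)
  have img: "uminus ` {..<0::real} = {0<..}"
    by (auto simp: image_iff intro!: exI[of _ "- x" for x])
  have "(\<lambda>x. \<bar>-1\<bar> * f (- x)) absolutely_integrable_on {..<0} \<and>
        integral {..<0} (\<lambda>x. \<bar>-1\<bar> * f (- x)) = I"
    using has_absolute_integral_change_of_variables_1'[of "{..<0::real}" uminus "\<lambda>x. -1" f I,
        OF _ der] img fabs pos by (auto simp: integral_unique)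
  moreover have "f (- x) = f x" for x by (simp add: f_def rho_def)
  ultimately have "f absolutely_integrable_on {..<0} \<and> integral {..<0} f = I" by simp
  then have neg: "(f has_integral I) {..<0}"
    by (metis absolutely_integrable_on_def has_integral_integral)
  have "(f has_integral (I + I)) ({..<0} \<union> {0<..})"
  proof (rule has_integral_Un[OF neg pos])
    have "{..<0::real} \<inter> {0<..} = {}" by auto
    then show "negligible ({..<0::real} \<inter> {0<..})" by simp
  qed
  then have "(f has_integral (I + I)) UNIV"
  proof (subst (asm) has_integral_spike_set_eq[where T=UNIV])
    show "negligible {x \<in> ({..<0} \<union> {0<..}) - UNIV. f x \<noteq> 0}" by simp
    show "negligible {x \<in> UNIV - ({..<0} \<union> {0<..}). f x \<noteq> 0}"
      by (rule negligible_subset[of "{0}"]) auto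
  qed
  moreover have "I + I = M p l" using M_simp[OF p l] unfolding I_def by (simp add: mult.commute)
  ultimately show ?thesis by (simp add: f_def[abs_def])
qed



lemma lborel_integral_from_has_integral:
  fixes h :: "real \<Rightarrow> real"
  assumes m: "h \<in> borel_measurable borel" and nn: "\<And>x. h x \<ge> 0"
    and hi: "(h has_integral I) UNIV"
  shows "integral\<^sup>L lborel h = I"
proof -
  have I0: "I \<ge> 0" using has_integral_nonneg[OF hi] nn by auto
  have "integral\<^sup>N lborel (\<lambda>x. indicator UNIV x * h x) = I"
    by (rule nn_integral_has_integral_lebesgue[OF _ hi]) (use nn in auto)
  then have "(\<integral>\<^sup>+ x. ennreal (h x) \<partial>lborel) = ennreal I" by simp
  moreover have "integral\<^sup>L lborel h = enn2real (\<integral>\<^sup>+ x. ennreal (h x) \<partial>lborel)"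
    by (rule integral_eq_nn_integral) (use m nn in auto)
  ultimately show ?thesis using I0 by simp
qed

lemma Erho_powr:
  assumes p: "p > 0" and l: "l \<ge> 0"
  shows "Erho p (\<lambda>x. \<bar>x\<bar> powr l) = M p l"
  unfolding Erho_def
proof (rule lborel_integral_from_has_integral)
  show "(\<lambda>x. \<bar>x\<bar> powr l * rho p x) \<in> borel_measurable borel"
    unfolding rho_def by measurable
  show "\<And>x. \<bar>x\<bar> powr l * rho p x \<ge> 0" using rho_nonneg[OF p] by simp
  show "((\<lambda>x. \<bar>x\<bar> powr l * rho p x) has_integral M p l) UNIV" by (rule full_integral[OF p l])
qed

lemma M_pos: "p > 0 \<Longrightarrow> l \<ge> 0 \<Longrightarrow> M p l > 0"
  unfolding M_def by (intro divide_pos_pos mult_pos_pos Gamma_real_pos) auto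

lemma nu2_eq: assumes p: "p > 0" shows "nu2 p = M p 2"
proof -
  have "(\<lambda>x::real. x\<^sup>2) = (\<lambda>x. \<bar>x\<bar> powr 2)"
    by (rule ext) (simp)
  then show ?thesis unfolding nu2_def using Erho_powr[OF p, of 2] by simp
qed



lemma frac3:
  fixes A B C l :: real
  assumes "A > 0" "B > 0" "C > 0"
  shows "(3*l/2)/B - (l+1)/A - (l/2-1)/C = ((3*l/2)*A*C - (l+1)*B*C - (l/2-1)*A*B)/(A*B*C)"
  using assms by (simp add: field_simps)

lemma term_nonneg:
  fixes l s k :: real
  assumes l: "l \<ge> 2" and s: "s > 0" and k: "k \<ge> 0"
  shows "(3*l/2)/(3 * s+k) - (l+1)/((l+1) * s+k) - (l/2-1)/(s+k) \<ge> 0"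
proof -
  have A: "(l+1) * s+k > 0" using l s k by (intro add_pos_nonneg mult_pos_pos) auto
  have B: "3 * s+k > 0" and C: "s+k > 0" using s k by auto
  have N: "(3*l/2)*((l+1) * s+k)*(s+k) - (l+1)*(3 * s+k)*(s+k) - (l/2-1)*((l+1) * s+k)*(3 * s+k)
        = l*(l-2)* s*k"
    by (simp add: field_simps)
  have "(3*l/2)/(3 * s+k) - (l+1)/((l+1) * s+k) - (l/2-1)/(s+k)
        = l*(l-2)* s*k / (((l+1) * s+k)*(3 * s+k)*(s+k))"
    by (subst frac3[OF A B C], subst N, rule refl)
  also have "\<dots> \<ge> 0" using A B C l s k by (intro divide_nonneg_pos mult_nonneg_nonneg mult_pos_pos) auto
  finally show ?thesis .
qed

lemma Digamma_sums:
  fixes z :: real assumes z: "z > 0"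
  shows "(\<lambda>k. inverse (real (Suc k)) - inverse (z + real k)) sums (Digamma z + euler_mascheroni)"
proof -
  have "summable (\<lambda>k. inverse (real (Suc k)) - inverse (z + real k))"
    using summable_Digamma[of z] z by simp
  then show ?thesis using Digamma_def[of z] by (simp add: summable_sums)
qed

lemma D_nonneg:
  fixes l s :: real
  assumes l: "l \<ge> 2" and s: "s > 0"
  shows "(l+1) * Digamma ((l+1)* s) + (l/2-1) * Digamma s - 3*(l/2) * Digamma (3* s) \<ge> 0"
proof -
  define T where "T z k = inverse (real (Suc k)) - inverse (z + real k)" for z :: real and k :: nat
  have a: "(l+1)* s > 0" using l s by auto
  have s3: "3* s > 0" using s by auto
  have S: "(\<lambda>k. (l+1) * T ((l+1)* s) k + (l/2-1) * T s k - 3*(l/2) * T (3* s) k) sums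
      ((l+1) * (Digamma ((l+1)* s) + euler_mascheroni) + (l/2-1) * (Digamma s + euler_mascheroni)
        - 3*(l/2) * (Digamma (3* s) + euler_mascheroni))"
    unfolding T_def
    by (intro sums_add sums_diff sums_mult Digamma_sums a s s3)
  have val: "(l+1) * (Digamma ((l+1)* s) + euler_mascheroni) + (l/2-1) * (Digamma s + euler_mascheroni)
        - 3*(l/2) * (Digamma (3* s) + euler_mascheroni)
      = (l+1) * Digamma ((l+1)* s) + (l/2-1) * Digamma s - 3*(l/2) * Digamma (3* s)"
    by (simp add: ring_distribs)
  have alg: "(l+1)*(i - a) + (l/2-1)*(i - c) - 3*(l/2)*(i - b) = (3*l/2)*b - (l+1)*a - (l/2-1)*c"
    for i a b c :: real by (simp add: ring_distribs)
  have tn: "(l+1) * T ((l+1)* s) k + (l/2-1) * T s k - 3*(l/2) * T (3* s) k \<ge> 0" for k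
  proof -
    have "(l+1) * T ((l+1)* s) k + (l/2-1) * T s k - 3*(l/2) * T (3* s) k
        = (3*l/2)/(3* s+real k) - (l+1)/((l+1)* s+real k) - (l/2-1)/(s+real k)"
      unfolding T_def alg by (simp only: divide_inverse)
    also have "\<dots> \<ge> 0" by (rule term_nonneg[OF l s]) simp
    finally show ?thesis .
  qed
  have "0 \<le> suminf (\<lambda>k. (l+1) * T ((l+1)* s) k + (l/2-1) * T s k - 3*(l/2) * T (3* s) k)"
    by (rule suminf_nonneg[OF sums_summable[OF S] tn])
  moreover have "suminf (\<lambda>k. (l+1) * T ((l+1)* s) k + (l/2-1) * T s k - 3*(l/2) * T (3* s) k) =
      (l+1) * (Digamma ((l+1)* s) + euler_mascheroni) + (l/2-1) * (Digamma s + euler_mascheroni)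
        - 3*(l/2) * (Digamma (3* s) + euler_mascheroni)"
    using S by (rule sums_unique[symmetric])
  ultimately show ?thesis using val by linarith
qed

definition G :: "real \<Rightarrow> real \<Rightarrow> real" where
  "G l s = ln_Gamma ((l+1)* s) + (l/2-1) * ln_Gamma s - (l/2) * ln_Gamma (3* s)"

lemma G_deriv:
  assumes l: "l \<ge> 0" and s: "s > 0"
  shows "(G l has_real_derivative
           ((l+1) * Digamma ((l+1)* s) + (l/2-1) * Digamma s - 3*(l/2) * Digamma (3* s))) (at s)"
proof -
  have a: "(l+1)* s > 0" using l s by auto
  have s3: "3* s > 0" using s by auto
  have d1: "((\<lambda>s. ln_Gamma ((l+1)* s)) has_real_derivative Digamma ((l+1)* s) * (l+1)) (at s)"
    by (rule DERIV_chain2[where g="\<lambda>s. (l+1) * s" and x=s, OF has_field_derivative_ln_Gamma_real[OF a]]) (auto intro!: derivative_eq_intros)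
  have d2: "(ln_Gamma has_real_derivative Digamma s) (at s)"
    by (rule has_field_derivative_ln_Gamma_real[OF s])
  have d3: "((\<lambda>s. ln_Gamma (3* s)) has_real_derivative Digamma (3* s) * 3) (at s)"
    by (rule DERIV_chain2[where g="\<lambda>s. 3 * s" and x=s, OF has_field_derivative_ln_Gamma_real[OF s3]]) (auto intro!: derivative_eq_intros)
  have "((\<lambda>s. ln_Gamma ((l+1)* s) + (l/2-1) * ln_Gamma s - (l/2) * ln_Gamma (3* s)) has_real_derivative
      (Digamma ((l+1)* s) * (l+1) + (l/2-1) * Digamma s - (l/2) * (Digamma (3* s) * 3))) (at s)"
    by (intro DERIV_diff DERIV_add DERIV_cmult d1 d2 d3)
  then show ?thesis unfolding G_def[abs_def] by (simp add: algebra_simps)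
qed

lemma G_mono:
  assumes l: "l \<ge> 2" and a: "a > 0" and ab: "a \<le> b"
  shows "G l a \<le> G l b"
proof (rule DERIV_nonneg_imp_increasing_open[OF ab])
  fix x assume "a < x" "x < b"
  then have x: "x > 0" using a by auto
  show "\<exists>y. (G l has_real_derivative y) (at x) \<and> 0 \<le> y"
    using G_deriv[of l x] D_nonneg[OF l x] l x by auto
next
  have "\<forall>x\<in>{a..b}. isCont (G l) x"
  proof
    fix x assume "x \<in> {a..b}"
    then have "x > 0" using a by auto
    then show "isCont (G l) x" using G_deriv[of l x] l by (auto intro: DERIV_isCont)
  qed
  then show "continuous_on {a..b} (G l)" by (rule continuous_at_imp_continuous_on)
qed

lemma lnalg: "(-l/2)*((2/p)*L + a - b) + ((l/p)*L + c - b) = c + (l/2-1)*b - (l/2)*(a::real)"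
  by (simp add: ring_distribs)

lemma ratio_eq:
  assumes p: "p > 0" and l: "l \<ge> 0"
  shows "(M p 2) powr (-l/2) * M p l = exp (G l (1/p))"
proof -
  have M2: "M p 2 > 0" and Ml: "M p l > 0" using M_pos p l by auto
  have g1: "Gamma (1/p) > 0" and g3: "Gamma (3/p) > 0" and gl: "Gamma ((l+1)/p) > 0"
    using p l by auto
  have ln3: "ln (a*b/c) = ln a + ln b - ln c" if "a > 0" "b > 0" "c > 0" for a b c :: real
    using that by (simp add: ln_div ln_mult)
  have "ln (M p 2) = ln (p powr (2/p) * Gamma (3/p) / Gamma (1/p))"
    by (simp add: M_def)
  also have "\<dots> = (2/p) * ln p + ln (Gamma (3/p)) - ln (Gamma (1/p))"
    using p g1 g3 by (subst ln3) auto
  finally have "ln (M p 2) = (2/p) * ln p + ln (Gamma (3/p)) - ln (Gamma (1/p))" .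
  moreover have "ln (M p l) = (l/p) * ln p + ln (Gamma ((l+1)/p)) - ln (Gamma (1/p))"
    using p g1 gl unfolding M_def by (subst ln3) auto
  moreover have "ln ((M p 2) powr (-l/2) * M p l) = (-l/2) * ln (M p 2) + ln (M p l)"
    using M2 Ml by (simp add: ln_mult)
  ultimately have "ln ((M p 2) powr (-l/2) * M p l)
      = (-l/2) * ((2/p) * ln p + ln (Gamma (3/p)) - ln (Gamma (1/p)))
        + ((l/p) * ln p + ln (Gamma ((l+1)/p)) - ln (Gamma (1/p)))"
    by simp
  also have "\<dots> = ln (Gamma ((l+1)/p)) + (l/2-1) * ln (Gamma (1/p)) - (l/2) * ln (Gamma (3/p))"
    by (rule lnalg)
  also have "\<dots> = G l (1/p)"
    using p l by (simp add: G_def ln_Gamma_real_pos)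
  finally have "ln ((M p 2) powr (-l/2) * M p l) = G l (1/p)" .
  moreover have "(M p 2) powr (-l/2) * M p l > 0" using M2 Ml by simp
  ultimately show ?thesis by (metis exp_ln)
qed

lemma part1:
  assumes l: "l \<ge> 2" and p: "0 < p" and pq: "p \<le> q"
  shows "nu q powr (-l) * Erho q (\<lambda>x. \<bar>x\<bar> powr l) \<le> nu p powr (-l) * Erho p (\<lambda>x. \<bar>x\<bar> powr l)"
proof -
  have q: "q > 0" using p pq by auto
  have nu_pow: "nu r powr (-l) * Erho r (\<lambda>x. \<bar>x\<bar> powr l) = exp (G l (1/r))" if r: "r > 0" for r
  proof -
    have M2: "M r 2 > 0" using M_pos r by auto
    have "nu r = M r 2 powr (1/2)" unfolding nu_def nu2_eq[OF r] using M2 by (simp add: powr_half_sqrt)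
    then have "nu r powr (-l) = M r 2 powr (-l/2)" using M2 by (simp add: powr_powr)
    then show ?thesis using ratio_eq[OF r] Erho_powr[OF r] l by simp
  qed
  have "G l (1/q) \<le> G l (1/p)" using G_mono[OF l] p q pq by (simp add: frac_le)
  then show ?thesis using nu_pow[OF p] nu_pow[OF q] by simp
qed



lemma Gamma_half_fact: "Gamma (real k + 1/2) * 4^k * fact k = Gamma (1/2) * fact (2*k)"
proof (induction k)
  case 0
  then show ?case by simp
next
  case (Suc k)
  have nz: "real k + 1/2 \<notin> \<int>\<^sub>\<le>\<^sub>0"
  proof
    assume "real k + 1/2 \<in> \<int>\<^sub>\<le>\<^sub>0"
    then have "real k + 1/2 \<le> 0" by (rule nonpos_Ints_nonpos)
    then show False by simp
  qed
  have g: "Gamma (real (Suc k) + 1/2) = (real k + 1/2) * Gamma (real k + 1/2)"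
    using Gamma_plus1[OF nz] by (simp add: add_ac)
  have f: "fact (2 * Suc k) = (2 * real k + 2) * (2 * real k + 1) * (fact (2*k) :: real)"
    by (simp add: algebra_simps)
  have "Gamma (real (Suc k) + 1/2) * 4 ^ Suc k * fact (Suc k)
      = (2 * real k + 2) * (2 * real k + 1) * (Gamma (real k + 1/2) * 4^k * fact k)"
    unfolding g by (simp add: algebra_simps)
  also have "\<dots> = Gamma (1/2) * fact (2 * Suc k)"
    unfolding Suc.IH f by (simp add: algebra_simps)
  finally show ?case .
qed

lemma cancelG: "(gg::real) > 0 \<Longrightarrow> a * (gg * b / c) / gg = a * b / c"
  by simp

lemma M2_moments: "M 2 (2 * real k) = fact (2*k) / (2^k * fact k)"
proof -
  have e: "(2 * real k + 1) / 2 = real k + 1/2" by simp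
  have g: "Gamma (1/2::real) > 0" by simp
  have "M 2 (2 * real k) = 2^k * Gamma (real k + 1/2) / Gamma (1/2)"
    unfolding M_def e by (simp add: powr_realpow)
  also have "Gamma (real k + 1/2) = Gamma (1/2) * fact (2*k) / (4^k * fact k)"
  proof -
    have nz: "(4::real)^k * fact k \<noteq> 0" by simp
    have "Gamma (real k + 1/2) = (Gamma (real k + 1/2) * 4^k * fact k) / (4^k * fact k)"
      using nz by simp
    also have "\<dots> = Gamma (1/2) * fact (2*k) / (4^k * fact k)"
      unfolding Gamma_half_fact[of k] ..
    finally show ?thesis .
  qed
  finally have "M 2 (2 * real k) = 2^k * (Gamma (1/2) * fact (2*k) / (4^k * fact k)) / Gamma (1/2)" .
  also have "\<dots> = 2^k * fact (2*k) / (4^k * fact k)" by (rule cancelG[OF g])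
  also have "(4::real)^k = 2^k * 2^k" by (simp add: power_mult_distrib[symmetric])
  finally show ?thesis by simp
qed

lemma moment_bound:
  assumes p: "p \<ge> 2"
  shows "M p (2 * real k) \<le> (M p 2)^k * (fact (2*k) / (2^k * fact k))"
proof (cases "k = 0")
  case True
  then show ?thesis using p by (simp add: M_def)
next
  case False
  define l where "l = 2 * real k"
  have l: "l \<ge> 2" using False by (simp add: l_def)
  have p0: "p > 0" using p by simp
  have M2: "M p 2 > 0" using M_pos p0 by simp
  have "exp (G l (1/p)) \<le> exp (G l (1/2))"
    using G_mono[OF l, of "1/p" "1/2"] p by (simp add: frac_le)
  moreover have "exp (G l (1/2)) = M 2 l"
    using ratio_eq[of 2 l] l M2_moments[of 1] by simp
  moreover have "M p 2 powr (-l/2) = inverse ((M p 2)^k)"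
  proof -
    have "-l/2 = - real k" by (simp add: l_def)
    then show ?thesis using M2 by (simp add: powr_minus powr_realpow)
  qed
  ultimately have "inverse ((M p 2)^k) * M p l \<le> M 2 l" using ratio_eq[OF p0, of l] l by simp
  then have "M p l / (M p 2)^k \<le> M 2 l" by (simp add: divide_inverse mult.commute)
  then have "M p l \<le> M 2 l * (M p 2)^k" using M2 by (simp add: pos_divide_le_eq)
  then have "M p l \<le> (M p 2)^k * M 2 l" by (simp add: mult.commute)
  then show ?thesis using M2_moments[of k] by (simp add: l_def)
qed



lemma nn_moment:
  assumes p: "p > 0" and c: "c \<ge> 0"
  shows "(\<integral>\<^sup>+x. ennreal (c * x^(2*k) * rho p x) \<partial>lborel) = ennreal (c * M p (2 * real k))"
proof -
  have hi: "((\<lambda>x. \<bar>x\<bar> powr (2 * real k) * rho p x) has_integral M p (2 * real k)) UNIV"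
    using full_integral[OF p, of "2 * real k"] by simp
  have "((\<lambda>x. x^(2*k) * rho p x) has_integral M p (2 * real k)) UNIV"
  proof (rule has_integral_spike[OF negligible_sing[of 0] _ hi])
    fix x :: real assume "x \<in> UNIV - {0}"
    then have x: "\<bar>x\<bar> > 0" by simp
    have "\<bar>x\<bar> powr (2 * real k) = \<bar>x\<bar> powr (real (2*k))" by simp
    also have "\<dots> = \<bar>x\<bar>^(2*k)" using x by (rule powr_realpow)
    also have "\<dots> = x^(2*k)" by (simp add: power_even_abs)
    finally show "x^(2*k) * rho p x = \<bar>x\<bar> powr (2 * real k) * rho p x" by simp
  qed
  then have h2: "((\<lambda>x. c * (x^(2*k) * rho p x)) has_integral c * M p (2 * real k)) UNIV"
    by (rule has_integral_mult_right)
  have nn: "0 \<le> c * (x^(2*k) * rho p x)" for x :: real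
  proof -
    have "0 \<le> x^(2*k)" by (simp add: power_mult)
    then show ?thesis using c rho_nonneg[OF p, of x] by simp
  qed
  have "integral\<^sup>N lborel (\<lambda>x. indicator UNIV x * (c * (x^(2*k) * rho p x))) = c * M p (2 * real k)"
    by (rule nn_integral_has_integral_lebesgue[OF _ h2]) (rule nn)
  then show ?thesis by (simp add: mult.assoc)
qed

lemma rho_even: "rho p (-x) = rho p x"
  by (simp add: rho_def)

lemma cosh_sums: "(\<lambda>k. y^(2*k) / fact (2*k)) sums cosh (y::real)"
proof -
  let ?f = "\<lambda>n. if even n then y ^ n /\<^sub>R fact n else 0"
  have "strict_mono (\<lambda>k::nat. 2*k)" by (rule strict_monoI) simp
  moreover have "?f n = 0" if "n \<notin> range (\<lambda>k::nat. 2*k)" for n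
    using that by (auto elim!: evenE)
  ultimately have "(\<lambda>k. ?f (2*k)) sums cosh y \<longleftrightarrow> ?f sums cosh y"
    by (rule sums_mono_reindex)
  with cosh_converges[of y] have "(\<lambda>k. ?f (2*k)) sums cosh y" by simp
  then show ?thesis by (simp add: divide_inverse mult.commute)
qed

lemma alg2: "(F2::real) \<noteq> 0 \<Longrightarrow> 2 * T / F2 * (Nk * (F2 / (P * F1))) = 2 * (Nk * T / P / F1)"
  by (simp add: field_simps)

lemma part2:
  assumes p: "p \<ge> 2"
  shows "Erho p (\<lambda>x. exp (t * x)) \<le> exp (nu2 p * t\<^sup>2 / 2)"
proof -
  have p0: "p > 0" using p by simp
  define N where "N = nu2 p"
  have N: "N = M p 2" "N > 0" using nu2_eq[OF p0] M_pos[OF p0, of 2] by (auto simp: N_def)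
  define B where "B = N * t\<^sup>2 / 2"
  define Ep where "Ep = (\<integral>\<^sup>+x. ennreal (exp (t*x) * rho p x) \<partial>lborel)"
  define Em where "Em = (\<integral>\<^sup>+x. ennreal (exp (- (t*x)) * rho p x) \<partial>lborel)"
  have measp: "(\<lambda>x. ennreal (exp (t*x) * rho p x)) \<in> borel_measurable borel"
    unfolding rho_def by measurable
  have measm: "(\<lambda>x. ennreal (exp (- (t*x)) * rho p x)) \<in> borel_measurable borel"
    unfolding rho_def by measurable
  have EpEm: "Ep = Em"
  proof -
    have "Ep = ennreal \<bar>-1\<bar> * (\<integral>\<^sup>+x. ennreal (exp (t*(0 + (-1) * x)) * rho p (0 + (-1) * x)) \<partial>lborel)"
      unfolding Ep_def by (rule nn_integral_real_affine[OF measp]) simp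
    also have "\<dots> = Em" unfolding Em_def by (simp add: rho_even)
    finally show ?thesis .
  qed
  have rn: "\<And>x. rho p x \<ge> 0" using rho_nonneg[OF p0] by simp
  define a where "a k x = 2 * t^(2*k) / fact (2*k) * x^(2*k) * rho p x" for k :: nat and x :: real
  have a_nn: "a k x \<ge> 0" for k x
  proof -
    have "0 \<le> t^(2*k)" "0 \<le> x^(2*k)" by (simp_all add: power_mult)
    then show ?thesis unfolding a_def using rn[of x] by simp
  qed
  have a_sums: "(\<lambda>k. a k x) sums ((exp (t*x) + exp (- (t*x))) * rho p x)" for x
  proof -
    have "(\<lambda>k. (2 * rho p x) * ((t*x)^(2*k) / fact (2*k))) sums ((2 * rho p x) * cosh (t*x))"
      by (rule sums_mult[OF cosh_sums])
    moreover have "(2 * rho p x) * ((t*x)^(2*k) / fact (2*k)) = a k x" for k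
      unfolding a_def by (simp add: power_mult_distrib)
    moreover have "(2 * rho p x) * cosh (t*x) = (exp (t*x) + exp (- (t*x))) * rho p x"
      by (simp add: cosh_def)
    ultimately show ?thesis by simp
  qed
  have "Ep + Em = (\<integral>\<^sup>+x. ennreal (exp (t*x) * rho p x) + ennreal (exp (- (t*x)) * rho p x) \<partial>lborel)"
    unfolding Ep_def Em_def by (rule nn_integral_add[symmetric]) (use measp measm in auto)
  also have "\<dots> = (\<integral>\<^sup>+x. (\<Sum>k. ennreal (a k x)) \<partial>lborel)"
  proof (rule nn_integral_cong)
    fix x :: real
    have "ennreal (exp (t*x) * rho p x) + ennreal (exp (- (t*x)) * rho p x)
        = ennreal ((exp (t*x) + exp (- (t*x))) * rho p x)"
      using rn[of x] by (simp add: distrib_right)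
    also have "\<dots> = ennreal (\<Sum>k. a k x)" using sums_unique[OF a_sums[of x]] by simp
    also have "\<dots> = (\<Sum>k. ennreal (a k x))"
      by (rule suminf_ennreal2[symmetric]) (use a_nn sums_summable[OF a_sums[of x]] in auto)
    finally show "ennreal (exp (t*x) * rho p x) + ennreal (exp (- (t*x)) * rho p x) = (\<Sum>k. ennreal (a k x))" .
  qed
  also have "\<dots> = (\<Sum>k. \<integral>\<^sup>+x. ennreal (a k x) \<partial>lborel)"
    by (rule nn_integral_suminf) (simp add: a_def rho_def)
  also have "\<dots> = (\<Sum>k. ennreal (2 * t^(2*k) / fact (2*k) * M p (2 * real k)))"
  proof -
    have "(\<integral>\<^sup>+x. ennreal (a k x) \<partial>lborel) = ennreal (2 * t^(2*k) / fact (2*k) * M p (2 * real k))" for k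
      unfolding a_def by (rule nn_moment[OF p0]) (simp add: power_mult)
    then show ?thesis by simp
  qed
  also have "\<dots> \<le> (\<Sum>k. ennreal (2 * (B^k / fact k)))"
  proof (rule suminf_le[OF _ summableI summableI])
    fix k
    have c0: "0 \<le> 2 * t^(2*k) / fact (2*k)" by (simp add: power_mult)
    have "2 * t^(2*k) / fact (2*k) * M p (2 * real k)
        \<le> 2 * t^(2*k) / fact (2*k) * (N^k * (fact (2*k) / (2^k * fact k)))"
      using moment_bound[OF p, of k] N(1) by (intro mult_left_mono c0) simp_all
    also have "\<dots> = 2 * (B^k / fact k)"
    proof -
      have h: "N^k * t^(2*k) / 2^k = B^k"
        unfolding B_def by (simp only: power_divide power_mult_distrib power_mult)
      have F: "(fact (2*k) :: real) \<noteq> 0" by simp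
      have a2: "2 * t^(2*k) / fact (2*k) * (N^k * (fact (2*k) / (2^k * fact k)))
          = 2 * (N^k * t^(2*k) / 2^k / fact k)" by (rule alg2[OF F])
      show ?thesis using a2 unfolding h .
    qed
    finally show "ennreal (2 * t^(2*k) / fact (2*k) * M p (2 * real k)) \<le> ennreal (2 * (B^k / fact k))"
      by (rule ennreal_leI)
  qed
  also have "\<dots> = ennreal (2 * exp B)"
  proof -
    have s: "(\<lambda>k. 2 * (B^k / fact k)) sums (2 * exp B)"
      using sums_mult[OF exp_converges[of B], of 2] by (simp add: divide_inverse mult.commute)
    have "B \<ge> 0" unfolding B_def using N by simp
    then have nn: "\<And>k. 0 \<le> 2 * (B^k / fact k)" by simp
    have "(\<Sum>k. ennreal (2 * (B^k / fact k))) = ennreal (\<Sum>k. 2 * (B^k / fact k))"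
      by (rule suminf_ennreal2[OF nn sums_summable[OF s]])
    also have "(\<Sum>k. 2 * (B^k / fact k)) = 2 * exp B" by (rule sums_unique[OF s, symmetric])
    finally show ?thesis .
  qed
  finally have "Ep + Ep \<le> ennreal (2 * exp B)" using EpEm by simp
  moreover have "ennreal (2 * exp B) = 2 * ennreal (exp B)"
    by (simp add: ennreal_mult)
  moreover have "Ep + Ep = 2 * Ep" by (rule mult_2[symmetric])
  ultimately have "2 * Ep \<le> 2 * ennreal (exp B)" by simp
  moreover have "(2::ennreal) \<noteq> 0" "(2::ennreal) \<noteq> top" by simp_all
  ultimately have EpB: "Ep \<le> ennreal (exp B)" using ennreal_mult_le_mult_iff by blast
  have "Erho p (\<lambda>x. exp (t * x)) = enn2real Ep"
    unfolding Erho_def Ep_def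
    by (rule integral_eq_nn_integral) (use rn in \<open>auto simp: rho_def\<close>)
  also have "\<dots> \<le> enn2real (ennreal (exp B))" using EpB by (rule enn2real_mono) simp
  also have "\<dots> = exp B" by simp
  finally show ?thesis unfolding B_def N_def .
qed


theorem lemma2p1:
  shows "(\<forall>l::real. l \<ge> 2 \<longrightarrow>
            (\<forall>p q::real. 0 < p \<and> p \<le> q \<longrightarrow>
               nu q powr (-l) * Erho q (\<lambda>x. \<bar>x\<bar> powr l)
                 \<le> nu p powr (-l) * Erho p (\<lambda>x. \<bar>x\<bar> powr l)))
       \<and> (\<forall>t p::real. p \<ge> 2 \<longrightarrow>
            Erho p (\<lambda>x. exp (t * x)) \<le> exp (nu2 p * t\<^sup>2 / 2))"
  using part1 part2 by blast

end
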